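(* Let $E$ be a countable set, $\sigma$ a random virtual permutation of $E$ with central law, $(\lambda_k)_{k\ge1}$ its sequence of asymptotic cycle lengths, and $C = L \cup \bigcup_k C_k$ the random space built from $(\lambda_k)$ as in the context. Define the random metric $D$ on $C$ by: $D(x,y) = \inf\{|a| : x - y \equiv a \pmod{\lambda_k}\}$ if $x, y \in C_k$ for the same $k$; $D(x,y) = 0$ if $x = y \in L$; $D(x,y) = 1$ otherwise. Suppose the probability space supports random variables $(X_x)_{x \in E}$ in $C$ which, conditionally on $(\lambda_k)$, are i.i.d. uniform on $C$, and such that almost surely: $X_x \in L$ iff $x$ is a fixed point of $\sigma$; for distinct $x,y$, $x \sim_\sigma y$ iff $X_x,X_y$ lie on the same circle $C_k$, in which case $\lambda(x)=\lambda(y)=\lambda_k$; and for distinct $x \sim_\sigma y$, $\delta(x,y) = X_y - X_x$ modulo $\lambda(x)$. Let $K := \{X_x : x \in E\}$. Then the map $x \mapsto X_x$ is almost surely a bijective isometry from $(E,d)$ onto $(K,D)$.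
   Context: A virtual permutation of $E$ is a family $\sigma=(\sigma_I)$ indexed by finite $I\subset E$, $\sigma_I$ a permutation of $I$, with $\sigma_I(x)=\sigma_J^m(x)$ ($m\ge1$ minimal with $\sigma_J^m(x)\in I$) for $I\subset J$; the space carries the $\sigma$-algebra generated by $\sigma\mapsto\sigma_J$. $x\sim_\sigma y$ iff $x,y$ lie in a common cycle of $\sigma_I$ for some (equivalently every) finite $I\ni x,y$; $\mathcal{C}_\sigma(x)$ is its class; $x$ is a fixed point if $\sigma_I(x)=x$ for all finite $I\ni x$. A law is central if each $\sigma_I$ has conjugation-invariant law. Under a central law: $\lambda(x)$ is the $L^1$ limit as $|I|\to\infty$ of $|I\cap\mathcal{C}_\sigma(x)|/|I|$; $\lambda_k$ is the supremum of $\min_{j\le k}\lambda(x_j)$ over pairwise non-equivalent $x_1,\dots,x_k$ (a.s. non-increasing with sum $\le1$); for $x\sim_\sigma y$, $k_I(x,y)\in\{0,\dots,|I\cap\mathcal{C}_\sigma(x)|-1\}$ satisfies $\sigma_I^{k_I(x,y)}(x)=y$, $\Delta(x,y)$ is the $L^1$ limit of $k_I(x,y)/|I|$, $\delta(x,y)$ its class mod $\lambda(x)$. The metric $d$ on $E$: $d(x,y)=1$ if $x\not\sim_\sigma y$, and $d(x,y)=\inf\{|a|: a\equiv\delta(x,y) \bmod \lambda(x)\}$ if $x\sim_\sigma y$. The space $C$: for each $k$ with $\lambda_k>0$ a circle $C_k$ of perimeter $\lambda_k$, pairwise disjoint, with $y-x\in\mathbb{R}/\lambda_k\mathbb{Z}$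 the counterclockwise arc length from $x$ to $y$; $L$ a disjoint segment of length $1-\sum_k\lambda_k$ (empty if $0$); uniform on $C$ means the probability measure giving arcs and subsegments their length. *)

theory Defs
  imports "HOL-Probability.Probability" "HOL-Combinatorics.Permutations"
begin

text \<open>A virtual permutation of E is represented as a function s mapping each finite
  subset I of E to a permutation s I of I (identity outside I).\<close>

definition virtual_perm :: "'e set \<Rightarrow> ('e set \<Rightarrow> 'e \<Rightarrow> 'e) \<Rightarrow> bool" where
  "virtual_perm E s \<longleftrightarrow>
     (\<forall>I. finite I \<and> I \<subseteq> E \<longrightarrow> s I permutes I) \<and>
     (\<forall>I J x. finite J \<and> J \<subseteq> E \<and> I \<subseteq> J \<and> x \<in> I \<longrightarrow>
        s I x = (s J ^^ (LEAST m. 1 \<le> m \<and> (s J ^^ m) x \<in> I)) x)"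

definition vequiv :: "'e set \<Rightarrow> ('e set \<Rightarrow> 'e \<Rightarrow> 'e) \<Rightarrow> 'e \<Rightarrow> 'e \<Rightarrow> bool" where
  "vequiv E s x y \<longleftrightarrow>
     (\<exists>I. finite I \<and> I \<subseteq> E \<and> x \<in> I \<and> y \<in> I \<and> (\<exists>n. (s I ^^ n) x = y))"

definition vclass :: "'e set \<Rightarrow> ('e set \<Rightarrow> 'e \<Rightarrow> 'e) \<Rightarrow> 'e \<Rightarrow> 'e set" where
  "vclass E s x = {y. vequiv E s x y}"

definition vfixed :: "'e set \<Rightarrow> ('e set \<Rightarrow> 'e \<Rightarrow> 'e) \<Rightarrow> 'e \<Rightarrow> bool" where
  "vfixed E s x \<longleftrightarrow> (\<forall>I. finite I \<and> I \<subseteq> E \<and> x \<in> I \<longrightarrow> s I x = x)"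

definition kI :: "'e set \<Rightarrow> ('e set \<Rightarrow> 'e \<Rightarrow> 'e) \<Rightarrow> 'e set \<Rightarrow> 'e \<Rightarrow> 'e \<Rightarrow> nat" where
  "kI E s I x y = (THE k. k < card (I \<inter> vclass E s x) \<and> (s I ^^ k) x = y)"

text \<open>The filter "|I| tends to infinity" over finite subsets I of E containing S.\<close>
definition finsets_top :: "'e set \<Rightarrow> 'e set \<Rightarrow> 'e set filter" where
  "finsets_top E S = (INF N. principal {I. finite I \<and> S \<subseteq> I \<and> I \<subseteq> E \<and> N \<le> card I})"

text \<open>lamseq E s l k is the paper's lambda_(k+1) (0-based index), computed pathwise
  from the values l x = lambda(x); the supremum of the empty set is taken to be 0.\<close>
definition lamseq :: "'e set \<Rightarrow> ('e set \<Rightarrow> 'e \<Rightarrow> 'e) \<Rightarrow> ('e \<Rightarrow> real) \<Rightarrow> nat \<Rightarrow> real" where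
  "lamseq E s l k = Sup (insert 0
     {Min ((\<lambda>j. l (xs j)) ` {0..k}) | xs.
        (\<forall>j\<in>{0..k}. xs j \<in> E) \<and>
        (\<forall>i\<in>{0..k}. \<forall>j\<in>{0..k}. i \<noteq> j \<longrightarrow> \<not> vequiv E s (xs i) (xs j))})"

text \<open>Circ k t is the point at counterclockwise arc length t (0 <= t < lambda) from a base
  point of the circle with perimeter Lam k (the paper's C_(k+1)); Seg s is the point at
  position s of the segment L.\<close>
datatype cpt = Circ nat real | Seg real

definition ell :: "(nat \<Rightarrow> real) \<Rightarrow> real" where
  "ell Lam = 1 - (\<Sum>k. Lam k)"

definition circle :: "(nat \<Rightarrow> real) \<Rightarrow> nat \<Rightarrow> cpt set" where
  "circle Lam k = {Circ k t | t. 0 < Lam k \<and> 0 \<le> t \<and> t < Lam k}"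

definition Lseg :: "(nat \<Rightarrow> real) \<Rightarrow> cpt set" where
  "Lseg Lam = (if 0 < ell Lam then {Seg s | s. 0 \<le> s \<and> s \<le> ell Lam} else {})"

definition Cspace :: "(nat \<Rightarrow> real) \<Rightarrow> cpt set" where
  "Cspace Lam = (\<Union>k. circle Lam k) \<union> Lseg Lam"

text \<open>Uniform measure on C of a set A (whose slices are Borel).\<close>
definition unifC :: "(nat \<Rightarrow> real) \<Rightarrow> cpt set \<Rightarrow> ennreal" where
  "unifC Lam A =
     (\<Sum>k. emeasure lborel ({t. Circ k t \<in> A} \<inter> {t. 0 < Lam k \<and> 0 \<le> t \<and> t < Lam k}))
     + emeasure lborel ({s. Seg s \<in> A} \<inter> {s. 0 < ell Lam \<and> 0 \<le> s \<and> s \<le> ell Lam})"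

definition admissible :: "cpt set \<Rightarrow> bool" where
  "admissible A \<longleftrightarrow> (\<forall>k. {t. Circ k t \<in> A} \<in> sets borel) \<and> {s. Seg s \<in> A} \<in> sets borel"

definition circdist :: "real \<Rightarrow> real \<Rightarrow> real" where
  "circdist l u = Inf {\<bar>a\<bar> | a. \<exists>m::int. u = a + of_int m * l}"

definition Dmet :: "(nat \<Rightarrow> real) \<Rightarrow> cpt \<Rightarrow> cpt \<Rightarrow> real" where
  "Dmet Lam p q = (case (p, q) of
       (Circ k s, Circ k' t) \<Rightarrow> (if k = k' then circdist (Lam k) (s - t) else 1)
     | (Seg s, Seg t) \<Rightarrow> (if s = t then 0 else 1)
     | _ \<Rightarrow> 1)"

definition dmet :: "'e set \<Rightarrow> ('e set \<Rightarrow> 'e \<Rightarrow> 'e) \<Rightarrow> ('e \<Rightarrow> real) \<Rightarrow> ('e \<Rightarrow> 'e \<Rightarrow> real)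
                    \<Rightarrow> 'e \<Rightarrow> 'e \<Rightarrow> real" where
  "dmet E s l Dl x y = (if vequiv E s x y then circdist (l x) (Dl x y) else 1)"

end

theory Submission
  imports Defs
begin


lemma nn_integral_cmult_le:
  fixes f :: "'a \<Rightarrow> ennreal"
  shows "c * integral\<^sup>N M f \<le> (\<integral>\<^sup>+x. c * f x \<partial>M)"
  unfolding nn_integral_def SUP_mult_left_ennreal
proof (rule SUP_least)
  fix g assume g: "g \<in> {g. simple_function M g \<and> g \<le> f}"
  then have "c * integral\<^sup>S M g = integral\<^sup>S M (\<lambda>x. c * g x)" by simp
  also have "\<dots> \<le> (SUP g \<in> {g. simple_function M g \<and> g \<le> (\<lambda>x. c * f x)}. integral\<^sup>S M g)"
    using g by (intro SUP_upper) (auto simp: le_fun_def intro: mult_left_mono)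
  finally show "c * integral\<^sup>S M g \<le> (SUP g \<in> {g. simple_function M g \<and> g \<le> (\<lambda>x. c * f x)}. integral\<^sup>S M g)" .
qed

lemma vp_perm: "virtual_perm E s \<Longrightarrow> finite I \<Longrightarrow> I \<subseteq> E \<Longrightarrow> s I permutes I"
  unfolding virtual_perm_def by blast

lemma vp_cons: "virtual_perm E s \<Longrightarrow> finite J \<Longrightarrow> J \<subseteq> E \<Longrightarrow> I \<subseteq> J \<Longrightarrow> x \<in> I \<Longrightarrow>
   s I x = (s J ^^ (LEAST m. 1 \<le> m \<and> (s J ^^ m) x \<in> I)) x"
  unfolding virtual_perm_def by blast

lemma funpow_in: "p permutes I \<Longrightarrow> x \<in> I \<Longrightarrow> (p ^^ n) x \<in> I"
  by (induction n) (auto simp: permutes_in_image)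

lemma B1:
  assumes vp: "virtual_perm E s" and K: "finite K" "K \<subseteq> E" and JK: "J \<subseteq> K" and x: "x \<in> J"
  shows "\<exists>m. (s J ^^ n) x = (s K ^^ m) x"
proof (induction n)
  case 0 then show ?case by (rule exI[of _ 0]) simp
next
  case (Suc n)
  then obtain m where m: "(s J ^^ n) x = (s K ^^ m) x" by blast
  have pJ: "s J permutes J" using vp_perm[OF vp, of J] K JK finite_subset by blast
  have z: "(s J ^^ n) x \<in> J" using funpow_in[OF pJ x] .
  define m' where "m' = (LEAST m. 1 \<le> m \<and> (s K ^^ m) ((s J ^^ n) x) \<in> J)"
  have "(s J ^^ Suc n) x = s J ((s J ^^ n) x)" by simp
  also have "\<dots> = (s K ^^ m') ((s J ^^ n) x)" unfolding m'_def using vp_cons[OF vp K JK z] .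
  also have "\<dots> = (s K ^^ (m' + m)) x" using m by (simp add: funpow_add)
  finally show ?case by blast
qed

lemma B2:
  assumes vp: "virtual_perm E s" and K: "finite K" "K \<subseteq> E" and IK: "I \<subseteq> K"
  shows "x \<in> I \<Longrightarrow> (s K ^^ n) x \<in> I \<Longrightarrow> \<exists>j. (s K ^^ n) x = (s I ^^ j) x"
proof (induction n arbitrary: x rule: less_induct)
  case (less n x)
  show ?case
  proof (cases "n = 0")
    case True then show ?thesis by (intro exI[of _ 0]) simp
  next
    case False
    define m where "m = (LEAST m. 1 \<le> m \<and> (s K ^^ m) x \<in> I)"
    have P: "1 \<le> n \<and> (s K ^^ n) x \<in> I" using False less.prems by simp
    have mn: "m \<le> n" unfolding m_def using P by (rule Least_le)
    have m1: "1 \<le> m \<and> (s K ^^ m) x \<in> I" unfolding m_def using P by (rule LeastI)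
    have sI: "s I x = (s K ^^ m) x" unfolding m_def using vp_cons[OF vp K IK less.prems(1)] .
    have pI: "s I permutes I" using vp_perm[OF vp, of I] K IK finite_subset by blast
    have sIx: "s I x \<in> I" using pI less.prems(1) by (simp add: permutes_in_image)
    have eq: "(s K ^^ n) x = (s K ^^ (n - m)) (s I x)"
      using sI mn by (metis funpow_add le_add_diff_inverse2 o_apply)
    have "n - m < n" using m1 mn False by simp
    then obtain j where "(s K ^^ (n - m)) (s I x) = (s I ^^ j) (s I x)"
      using less.IH[of "n - m" "s I x"] sIx less.prems(2) eq by auto
    then have "(s K ^^ n) x = (s I ^^ Suc j) x" using eq by (metis funpow_Suc_right o_apply)
    then show ?thesis by blast
  qed
qed

lemma vequiv_orbit:
  assumes vp: "virtual_perm E s" and I: "finite I" "I \<subseteq> E" and x: "x \<in> I" and y: "y \<in> I"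
    and e: "vequiv E s x y"
  shows "\<exists>n. (s I ^^ n) x = y"
proof -
  obtain J n where J: "finite J" "J \<subseteq> E" "x \<in> J" "y \<in> J" "(s J ^^ n) x = y"
    using e unfolding vequiv_def by blast
  define K where "K = I \<union> J"
  have K: "finite K" "K \<subseteq> E" using I J unfolding K_def by auto
  obtain m where m: "(s J ^^ n) x = (s K ^^ m) x"
    using B1[OF vp K, of J x n] J unfolding K_def by auto
  obtain j where "(s K ^^ m) x = (s I ^^ j) x"
    using B2[OF vp K, of I x m] x y J(5) m unfolding K_def by auto
  then show ?thesis using J(5) m by metis
qed

lemma kI_self:
  assumes vp: "virtual_perm E s" and I: "finite I" "I \<subseteq> E" and x: "x \<in> I"
  shows "kI E s I x x = 0"
  unfolding kI_def
proof (rule the_equality)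
  have "x \<in> I \<inter> vclass E s x" using I x unfolding vclass_def vequiv_def
    by (auto intro!: exI[of _ I] exI[of _ 0])
  then have "card (I \<inter> vclass E s x) > 0" using I by (auto simp: card_gt_0_iff)
  then show "0 < card (I \<inter> vclass E s x) \<and> (s I ^^ 0) x = x" by simp
next
  fix k assume k: "k < card (I \<inter> vclass E s x) \<and> (s I ^^ k) x = x"
  show "k = 0"
  proof (rule ccontr)
    assume k0: "k \<noteq> 0"
    have "I \<inter> vclass E s x \<subseteq> (\<lambda>j. (s I ^^ j) x) ` {..<k}"
    proof
      fix y assume "y \<in> I \<inter> vclass E s x"
      then obtain n where n: "(s I ^^ n) x = y"
        using vequiv_orbit[OF vp I x] unfolding vclass_def by auto
      have "(s I ^^ (n mod k)) x = y" using funpow_mod_eq[where f="s I" and n=k and x=x and m=n] k n by simp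
      moreover have "n mod k < k" using k0 by simp
      ultimately show "y \<in> (\<lambda>j. (s I ^^ j) x) ` {..<k}" by blast
    qed
    then have "card (I \<inter> vclass E s x) \<le> card ((\<lambda>j. (s I ^^ j) x) ` {..<k})"
      by (intro card_mono) auto
    also have "\<dots> \<le> k" using card_image_le[of "{..<k}"] by simp
    finally show False using k by simp
  qed
qed



definition pc :: "nat \<Rightarrow> (nat \<times> int) + int \<Rightarrow> cpt set" where
  "pc n i = (case i of Inl (k, j) \<Rightarrow> {Circ k t | t. t \<in> {real_of_int j / real n ..< (real_of_int j + 1) / real n}}
                     | Inr j \<Rightarrow> {Seg t | t. t \<in> {real_of_int j / real n ..< (real_of_int j + 1) / real n}})"

lemma floor_piece:
  assumes "n > 0"
  shows "(t::real) \<in> {real_of_int \<lfloor>t * n\<rfloor> / real n ..< (real_of_int \<lfloor>t * n\<rfloor> + 1) / real n}"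
  using assms by (auto simp: field_simps) linarith

lemma piece_floor:
  assumes "n > 0" "(t::real) \<in> {real_of_int j / real n ..< (real_of_int j + 1) / real n}"
  shows "j = \<lfloor>t * n\<rfloor>"
  using assms by (intro floor_unique[symmetric]) (auto simp: field_simps)

lemma pc_cover: "n > 0 \<Longrightarrow> \<exists>i. p \<in> pc n i"
proof (cases p)
  case (Circ k t) assume n: "n > 0"
  then show ?thesis using floor_piece[OF n, of t] Circ unfolding pc_def
    by (intro exI[of _ "Inl (k, \<lfloor>t * n\<rfloor>)"]) auto
next
  case (Seg t) assume n: "n > 0"
  then show ?thesis using floor_piece[OF n, of t] Seg unfolding pc_def
    by (intro exI[of _ "Inr \<lfloor>t * n\<rfloor>"]) auto
qed

lemma pc_disj: "n > 0 \<Longrightarrow> p \<in> pc n i \<Longrightarrow> p \<in> pc n i' \<Longrightarrow> i = i'"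
  unfolding pc_def using piece_floor
  by (auto split: sum.splits prod.splits) blast+

lemma pc_adm: "admissible (pc n i)"
  unfolding admissible_def pc_def by (auto split: sum.splits prod.splits)

lemma pc_unif:
  assumes n: "n > 0"
  shows "unifC L (pc n i) \<le> ennreal (1 / real n)"
proof (cases i)
  case (Inl a)
  obtain k j where a: "a = (k, j)" by (cases a)
  let ?S = "{real_of_int j / real n ..< (real_of_int j + 1) / real n}"
  have c: "{t. Circ k' t \<in> pc n i} = (if k' = k then ?S else {})" for k'
    unfolding pc_def Inl a by auto
  have s: "{t. Seg t \<in> pc n i} = {}" unfolding pc_def Inl a by auto
  let ?f = "\<lambda>k'. emeasure lborel ({t. Circ k' t \<in> pc n i} \<inter> {t. 0 < L k' \<and> 0 \<le> t \<and> t < L k'})"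
  have "suminf ?f = sum ?f {k}" by (rule suminf_finite) (auto simp: c)
  also have "\<dots> \<le> emeasure lborel ?S" by (simp add: c emeasure_mono)
  also have "\<dots> = ennreal (1 / real n)" using n by (simp add: field_simps diff_divide_distrib)
  finally show ?thesis unfolding unifC_def s by simp
next
  case (Inr j)
  let ?S = "{real_of_int j / real n ..< (real_of_int j + 1) / real n}"
  have c: "{t. Circ k' t \<in> pc n i} = {}" for k'
    unfolding pc_def Inr by auto
  have s: "{t. Seg t \<in> pc n i} = ?S" unfolding pc_def Inr by auto
  have "emeasure lborel (?S \<inter> {s. 0 < ell L \<and> 0 \<le> s \<and> s \<le> ell L}) \<le> emeasure lborel ?S"
    by (simp add: emeasure_mono)
  also have "\<dots> = ennreal (1 / real n)" using n by (simp add: field_simps diff_divide_distrib)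
  finally show ?thesis unfolding unifC_def s c by simp
qed



lemma noatom:
  fixes X :: "'e \<Rightarrow> 'w \<Rightarrow> cpt" and U :: "'w \<Rightarrow> cpt set \<Rightarrow> ennreal"
  assumes P: "prob_space M"
    and measx: "\<And>A. admissible A \<Longrightarrow> {\<omega>\<in>space M. X x \<omega> \<in> A} \<in> sets M"
    and measy: "\<And>A. admissible A \<Longrightarrow> {\<omega>\<in>space M. X y \<omega> \<in> A} \<in> sets M"
    and iid1: "\<And>A. admissible A \<Longrightarrow> emeasure M {\<omega>\<in>space M. X x \<omega> \<in> A} = (\<integral>\<^sup>+\<omega>. U \<omega> A \<partial>M)"
    and iid2: "\<And>A. admissible A \<Longrightarrow> emeasure M {\<omega>\<in>space M. X x \<omega> \<in> A \<and> X y \<omega> \<in> A}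
                  = (\<integral>\<^sup>+\<omega>. U \<omega> A * U \<omega> A \<partial>M)"
    and bound: "\<And>n i \<omega>. n > 0 \<Longrightarrow> U \<omega> (pc n i) \<le> ennreal (1 / real n)"
  shows "AE \<omega> in M. X x \<omega> \<noteq> X y \<omega>"
proof -
  interpret prob_space M by (rule P)
  define g :: "nat \<Rightarrow> (nat \<times> int) + int" where "g = from_nat_into UNIV"
  have infU: "infinite (UNIV :: ((nat \<times> int) + int) set)"
  proof
    assume "finite (UNIV :: ((nat \<times> int) + int) set)"
    then have "finite (range (Inr :: int \<Rightarrow> (nat \<times> int) + int))" by (rule finite_subset[rotated]) auto
    then have "finite (UNIV :: int set)" using finite_imageD[of Inr "UNIV::int set"] by (auto simp: inj_on_def)
    then show False using infinite_UNIV_int by simp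
  qed
  have bij: "bij g" unfolding g_def by (rule bij_betw_from_nat_into) (auto simp: infU)
  define Q where "Q n i = pc n (g i)" for n i
  have Qadm: "admissible (Q n i)" for n i unfolding Q_def by (rule pc_adm)
  define Nn where "Nn n = (\<Union>i. {\<omega>\<in>space M. X x \<omega> \<in> Q n i \<and> X y \<omega> \<in> Q n i})" for n
  have setsNi: "{\<omega>\<in>space M. X x \<omega> \<in> Q n i \<and> X y \<omega> \<in> Q n i} \<in> sets M" for n i
  proof -
    have "{\<omega>\<in>space M. X x \<omega> \<in> Q n i \<and> X y \<omega> \<in> Q n i} =
        {\<omega>\<in>space M. X x \<omega> \<in> Q n i} \<inter> {\<omega>\<in>space M. X y \<omega> \<in> Q n i}" by auto
    then show ?thesis using measx[OF Qadm] measy[OF Qadm] by auto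
  qed
  have setsN: "Nn n \<in> sets M" for n unfolding Nn_def using setsNi by auto
  have key: "of_nat n * emeasure M (Nn n) \<le> 1" if n: "n > 0" for n
  proof -
    have "emeasure M (Nn n) \<le> (\<Sum>i. emeasure M {\<omega>\<in>space M. X x \<omega> \<in> Q n i \<and> X y \<omega> \<in> Q n i})"
      unfolding Nn_def by (rule emeasure_subadditive_countably) (use setsNi in auto)
    also have "\<dots> = (\<Sum>i. \<integral>\<^sup>+\<omega>. U \<omega> (Q n i) * U \<omega> (Q n i) \<partial>M)"
      using iid2[OF Qadm] by simp
    finally have "of_nat n * emeasure M (Nn n) \<le> of_nat n * (\<Sum>i. \<integral>\<^sup>+\<omega>. U \<omega> (Q n i) * U \<omega> (Q n i) \<partial>M)"
      by (rule mult_left_mono) simp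
    also have "\<dots> = (\<Sum>i. of_nat n * \<integral>\<^sup>+\<omega>. U \<omega> (Q n i) * U \<omega> (Q n i) \<partial>M)" by simp
    also have "\<dots> \<le> (\<Sum>i. \<integral>\<^sup>+\<omega>. of_nat n * (U \<omega> (Q n i) * U \<omega> (Q n i)) \<partial>M)"
      by (intro suminf_le nn_integral_cmult_le) auto
    also have "\<dots> \<le> (\<Sum>i. \<integral>\<^sup>+\<omega>. U \<omega> (Q n i) \<partial>M)"
    proof (intro suminf_le nn_integral_mono)
      fix i \<omega>
      have "of_nat n * U \<omega> (Q n i) \<le> of_nat n * ennreal (1 / real n)"
        unfolding Q_def by (intro mult_left_mono bound n) simp
      also have "\<dots> = ennreal (real n) * ennreal (1 / real n)"
        by (simp add: ennreal_of_nat_eq_real_of_nat)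
      also have "\<dots> = ennreal (real n * (1 / real n))" by (rule ennreal_mult[symmetric]) auto
      also have "\<dots> = 1" using n by simp
      finally have "of_nat n * U \<omega> (Q n i) * U \<omega> (Q n i) \<le> 1 * U \<omega> (Q n i)"
        by (rule mult_right_mono) simp
      then show "of_nat n * (U \<omega> (Q n i) * U \<omega> (Q n i)) \<le> U \<omega> (Q n i)"
        by (simp add: mult.assoc)
    qed auto
    also have "\<dots> = (\<Sum>i. emeasure M {\<omega>\<in>space M. X x \<omega> \<in> Q n i})"
      using iid1[OF Qadm] by simp
    also have "\<dots> = emeasure M (\<Union>i. {\<omega>\<in>space M. X x \<omega> \<in> Q n i})"
    proof (rule suminf_emeasure)
      show "range (\<lambda>i. {\<omega>\<in>space M. X x \<omega> \<in> Q n i}) \<subseteq> sets M" using measx[OF Qadm] by auto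
      show "disjoint_family (\<lambda>i. {\<omega>\<in>space M. X x \<omega> \<in> Q n i})"
        unfolding disjoint_family_on_def
      proof (intro ballI impI)
        fix i j :: nat assume "i \<noteq> j"
        then have "g i \<noteq> g j" using bij by (auto simp: bij_def inj_on_def)
        then show "{\<omega>\<in>space M. X x \<omega> \<in> Q n i} \<inter> {\<omega>\<in>space M. X x \<omega> \<in> Q n j} = {}"
          unfolding Q_def using pc_disj[OF n] by blast
      qed
    qed
    also have "\<dots> \<le> 1" by (rule emeasure_le_1)
    finally show ?thesis .
  qed
  define N where "N = (\<Inter>n. Nn (Suc n))"
  have setsNN: "N \<in> sets M" unfolding N_def using setsN by auto
  have sub: "{\<omega>\<in>space M. \<not> X x \<omega> \<noteq> X y \<omega>} \<subseteq> N"
  proof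
    fix \<omega> assume w: "\<omega> \<in> {\<omega>\<in>space M. \<not> X x \<omega> \<noteq> X y \<omega>}"
    show "\<omega> \<in> N" unfolding N_def
    proof
      fix n
      obtain c where c: "X x \<omega> \<in> pc (Suc n) c" using pc_cover[of "Suc n"] by blast
      obtain i where "g i = c" using bij by (metis bij_pointE)
      then show "\<omega> \<in> Nn (Suc n)" unfolding Nn_def Q_def using w c by auto
    qed
  qed
  have "emeasure M N = 0"
  proof -
    have le: "of_nat (Suc n) * measure M N \<le> 1" for n
    proof -
      have "of_nat (Suc n) * emeasure M N \<le> of_nat (Suc n) * emeasure M (Nn (Suc n))"
        unfolding N_def by (intro mult_left_mono emeasure_mono) (use setsN in auto)
      also have "\<dots> \<le> 1" by (rule key) simp
      finally have "ennreal (real (Suc n) * measure M N) \<le> ennreal 1"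
        by (simp add: emeasure_eq_measure ennreal_of_nat_eq_real_of_nat ennreal_mult del: of_nat_Suc)
      then show ?thesis by (simp add: ennreal_le_iff2 del: of_nat_Suc)
    qed
    have "measure M N \<le> 0"
    proof (rule ccontr)
      assume "\<not> measure M N \<le> 0"
      then have pos: "measure M N > 0" by simp
      obtain n :: nat where "n > 1 / measure M N" using reals_Archimedean2 by blast
      then have "real n * measure M N > 1" using pos by (simp add: field_simps)
      moreover have "real (Suc n) * measure M N \<ge> real n * measure M N" using pos by simp
      ultimately show False using le[of n] by simp
    qed
    then have "measure M N = 0" by (simp add: antisym)
    then show ?thesis by (simp add: emeasure_eq_measure)
  qed
  then show ?thesis using sub setsNN by (intro AE_I) auto
qed



lemma circdist_0: "circdist l 0 = 0"
proof -
  have "circdist l 0 = Inf {\<bar>a\<bar> | a. \<exists>m::int. 0 = a + of_int m * l}" by (simp add: circdist_def)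
  also have "\<dots> = 0"
  proof (rule cInf_eq_minimum)
    show "0 \<in> {\<bar>a\<bar> | a. \<exists>m::int. 0 = a + of_int m * l}" by (auto intro!: exI[of _ 0])
  qed auto
  finally show ?thesis .
qed

lemma circdist_neg: "circdist l (- u) = circdist l u"
proof -
  have "{\<bar>a\<bar> | a. \<exists>m::int. - u = a + of_int m * l} = {\<bar>a\<bar> | a. \<exists>m::int. u = a + of_int m * l}"
  proof (intro equalityI subsetI)
    fix z assume "z \<in> {\<bar>a\<bar> | a. \<exists>m::int. - u = a + of_int m * l}"
    then obtain a m where "z = \<bar>a\<bar>" "- u = a + of_int m * l" by auto
    then show "z \<in> {\<bar>a\<bar> | a. \<exists>m::int. u = a + of_int m * l}"
      by (auto intro!: exI[of _ "-a"] exI[of _ "-m"])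
  next
    fix z assume "z \<in> {\<bar>a\<bar> | a. \<exists>m::int. u = a + of_int m * l}"
    then obtain a m where "z = \<bar>a\<bar>" "u = a + of_int m * l" by auto
    then show "z \<in> {\<bar>a\<bar> | a. \<exists>m::int. - u = a + of_int m * l}"
      by (auto intro!: exI[of _ "-a"] exI[of _ "-m"])
  qed
  then show ?thesis by (simp add: circdist_def)
qed

lemma circdist_shift: "circdist l (u + of_int m0 * l) = circdist l u"
proof -
  have "{\<bar>a\<bar> | a. \<exists>m::int. u + of_int m0 * l = a + of_int m * l} = {\<bar>a\<bar> | a. \<exists>m::int. u = a + of_int m * l}"
  proof (intro equalityI subsetI)
    fix z assume "z \<in> {\<bar>a\<bar> | a. \<exists>m::int. u + of_int m0 * l = a + of_int m * l}"
    then obtain a m where "z = \<bar>a\<bar>" "u + of_int m0 * l = a + of_int m * l" by auto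
    then show "z \<in> {\<bar>a\<bar> | a. \<exists>m::int. u = a + of_int m * l}"
      by (auto intro!: exI[of _ "a"] exI[of _ "m - m0"] simp: algebra_simps)
  next
    fix z assume "z \<in> {\<bar>a\<bar> | a. \<exists>m::int. u = a + of_int m * l}"
    then obtain a m where "z = \<bar>a\<bar>" "u = a + of_int m * l" by auto
    then show "z \<in> {\<bar>a\<bar> | a. \<exists>m::int. u + of_int m0 * l = a + of_int m * l}"
      by (auto intro!: exI[of _ "a"] exI[of _ "m + m0"] simp: algebra_simps)
  qed
  then show ?thesis by (simp add: circdist_def)
qed

lemma Circ_in_C: "Circ k t \<in> Cspace L \<Longrightarrow> Circ k t \<in> circle L k"
  unfolding Cspace_def circle_def Lseg_def by (auto split: if_splits)

lemma pointwise:
  fixes Y :: "'e \<Rightarrow> cpt"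
  assumes inj: "\<forall>x\<in>E. \<forall>y\<in>E. x \<noteq> y \<longrightarrow> Y x \<noteq> Y y"
    and D0: "\<forall>x\<in>E. D x x = 0"
    and inC: "\<forall>x\<in>E. Y x \<in> Cspace L"
    and eqv: "\<forall>x\<in>E. \<forall>y\<in>E. x \<noteq> y \<longrightarrow>
        (vequiv E s x y \<longleftrightarrow> (\<exists>k. Y x \<in> circle L k \<and> Y y \<in> circle L k))
        \<and> (\<forall>k. Y x \<in> circle L k \<and> Y y \<in> circle L k \<longrightarrow> l x = L k \<and> l y = L k)"
    and dlt: "\<forall>x\<in>E. \<forall>y\<in>E. x \<noteq> y \<and> vequiv E s x y \<longrightarrow>
        (\<exists>k s t. Y x = Circ k s \<and> Y y = Circ k t \<and> (\<exists>m::int. D x y = (t - s) + of_int m * l x))"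
  shows "bij_betw Y E (Y ` E) \<and> (\<forall>x\<in>E. \<forall>y\<in>E. Dmet L (Y x) (Y y) = dmet E s l D x y)"
proof
  show "bij_betw Y E (Y ` E)" using inj by (auto simp: bij_betw_def inj_on_def)
next
  show "\<forall>x\<in>E. \<forall>y\<in>E. Dmet L (Y x) (Y y) = dmet E s l D x y"
  proof (intro ballI)
    fix x y assume x: "x \<in> E" and y: "y \<in> E"
    show "Dmet L (Y x) (Y y) = dmet E s l D x y"
    proof (cases "x = y")
      case True
      have ve: "vequiv E s x x" using x unfolding vequiv_def by (auto intro!: exI[of _ "{x}"] exI[of _ 0])
      have "dmet E s l D x x = 0" using ve D0 x by (simp add: dmet_def circdist_0)
      moreover have "Dmet L (Y x) (Y x) = 0" by (cases "Y x") (auto simp: Dmet_def circdist_0)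
      ultimately show ?thesis using True by simp
    next
      case False
      show ?thesis
      proof (cases "vequiv E s x y")
        case True
        obtain k a b m where k: "Y x = Circ k a" "Y y = Circ k b" and m: "D x y = (b - a) + of_int m * l x"
          using dlt x y False True by blast
        have "Y x \<in> circle L k" "Y y \<in> circle L k" using inC x y k Circ_in_C by metis+
        then have lx: "l x = L k" using eqv x y False by blast
        have "dmet E s l D x y = circdist (L k) ((b - a) + of_int m * L k)"
          using True m lx by (simp add: dmet_def)
        also have "\<dots> = circdist (L k) (- (a - b))" by (simp add: circdist_shift del: circdist_neg)
        also have "\<dots> = Dmet L (Y x) (Y y)" using circdist_neg[of "L k" "a - b"] by (simp add: k Dmet_def)
        finally show ?thesis by simp
      next
        case nv: False
        have "dmet E s l D x y = 1" using nv by (simp add: dmet_def)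
        moreover have "Dmet L (Y x) (Y y) = 1"
        proof (cases "Y x")
          case (Circ k a)
          show ?thesis
          proof (cases "Y y")
            case (Circ k' b)
            have "k \<noteq> k'"
            proof
              assume "k = k'"
              then have "Y x \<in> circle L k" "Y y \<in> circle L k"
                using inC x y \<open>Y x = Circ k a\<close> Circ Circ_in_C by metis+
              then show False using eqv x y False nv by blast
            qed
            then show ?thesis using \<open>Y x = Circ k a\<close> Circ by (simp add: Dmet_def)
          next
            case (Seg b) then show ?thesis using \<open>Y x = Circ k a\<close> by (simp add: Dmet_def)
          qed
        next
          case (Seg a)
          have "Y x \<noteq> Y y" using inj x y False by blast
          then show ?thesis using Seg by (cases "Y y") (auto simp: Dmet_def)
        qed
        ultimately show ?thesis by simp
      qed
    qed
  qed
qed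



lemma finsets_top_ev: "eventually (\<lambda>I. finite I \<and> S \<subseteq> I \<and> I \<subseteq> E) (finsets_top E S)"
  unfolding finsets_top_def
  by (rule eventually_INF1[of 0]) (auto simp: eventually_principal)

lemma finsets_top_nontriv:
  assumes iE: "infinite E" and S: "finite S" "S \<subseteq> E"
  shows "finsets_top E S \<noteq> bot"
proof
  assume b: "finsets_top E S = bot"
  have "eventually (\<lambda>_. False) (finsets_top E S)" using b by simp
  then obtain N where "eventually (\<lambda>_. False) (principal {I. finite I \<and> S \<subseteq> I \<and> I \<subseteq> E \<and> N \<le> card I})"
  proof -
    have "eventually (\<lambda>_. False) (finsets_top E S) \<longleftrightarrow>
      (\<exists>N\<in>UNIV. eventually (\<lambda>_. False) (principal {I. finite I \<and> S \<subseteq> I \<and> I \<subseteq> E \<and> N \<le> card I}))"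
      unfolding finsets_top_def
    proof (rule eventually_INF_base)
      fix a b :: nat
      show "\<exists>x\<in>UNIV. principal {I. finite I \<and> S \<subseteq> I \<and> I \<subseteq> E \<and> x \<le> card I}
          \<le> inf (principal {I. finite I \<and> S \<subseteq> I \<and> I \<subseteq> E \<and> a \<le> card I})
                (principal {I. finite I \<and> S \<subseteq> I \<and> I \<subseteq> E \<and> b \<le> card I})"
        by (intro bexI[of _ "max a b"]) (auto simp: inf_principal)
    qed simp
    then show ?thesis using that \<open>eventually (\<lambda>_. False) (finsets_top E S)\<close> by blast
  qed
  then have emp: "{I. finite I \<and> S \<subseteq> I \<and> I \<subseteq> E \<and> N \<le> card I} = {}"
    by (auto simp: eventually_principal)
  obtain B where B: "finite B" "card B = N" "B \<subseteq> E" using infinite_arbitrarily_large[OF iE] by blast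
  have "card B \<le> card (S \<union> B)" using B S by (intro card_mono) auto
  then have "S \<union> B \<in> {I. finite I \<and> S \<subseteq> I \<and> I \<subseteq> E \<and> N \<le> card I}" using B S by auto
  then show False using emp by simp
qed

lemma Delta_self:
  fixes M :: "'w measure" and \<sigma> :: "'w \<Rightarrow> 'e set \<Rightarrow> 'e \<Rightarrow> 'e"
  assumes vp: "\<forall>\<omega>\<in>space M. virtual_perm E (\<sigma> \<omega>)"
    and iE: "infinite E" and x: "x \<in> E"
    and meas: "Delta x x \<in> borel_measurable M"
    and lim: "((\<lambda>I. \<integral>\<^sup>+\<omega>. ennreal (indicator {\<omega>. vequiv E (\<sigma> \<omega>) x x} \<omega> *
              \<bar>real (kI E (\<sigma> \<omega>) I x x) / real (card I) - Delta x x \<omega>\<bar>) \<partial>M) \<longlongrightarrow> 0)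
            (finsets_top E {x, x})"
  shows "AE \<omega> in M. Delta x x \<omega> = 0"
proof -
  let ?c = "\<integral>\<^sup>+\<omega>. ennreal \<bar>Delta x x \<omega>\<bar> \<partial>M"
  have ev: "eventually (\<lambda>I. (\<integral>\<^sup>+\<omega>. ennreal (indicator {\<omega>. vequiv E (\<sigma> \<omega>) x x} \<omega> *
              \<bar>real (kI E (\<sigma> \<omega>) I x x) / real (card I) - Delta x x \<omega>\<bar>) \<partial>M) = ?c) (finsets_top E {x, x})"
    using finsets_top_ev[of "{x,x}" E]
  proof eventually_elim
    case (elim I)
    have ve: "vequiv E s x x" for s using x unfolding vequiv_def by (auto intro!: exI[of _ "{x}"] exI[of _ 0])
    show ?case
    proof (rule nn_integral_cong)
      fix \<omega> assume w: "\<omega> \<in> space M"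
      have "kI E (\<sigma> \<omega>) I x x = 0" using kI_self[of E "\<sigma> \<omega>" I x] vp w elim by auto
      then show "ennreal (indicator {\<omega>. vequiv E (\<sigma> \<omega>) x x} \<omega> *
              \<bar>real (kI E (\<sigma> \<omega>) I x x) / real (card I) - Delta x x \<omega>\<bar>) = ennreal \<bar>Delta x x \<omega>\<bar>"
        using ve by simp
    qed
  qed
  have "((\<lambda>_. ?c) \<longlongrightarrow> 0) (finsets_top E {x, x})"
    using tendsto_cong[OF ev] lim by simp
  moreover have "finsets_top E {x, x} \<noteq> bot" using finsets_top_nontriv[OF iE, of "{x,x}"] x by simp
  ultimately have "?c = 0" using tendsto_const_iff by blast
  then have "AE \<omega> in M. ennreal \<bar>Delta x x \<omega>\<bar> = 0"
    using nn_integral_0_iff_AE[of "\<lambda>\<omega>. ennreal \<bar>Delta x x \<omega>\<bar>" M] meas by simp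
  then show ?thesis by eventually_elim simp
qed


theorem proposition4p2:
  fixes M :: "'w measure"
    and E :: "'e set"
    and \<sigma> :: "'w \<Rightarrow> 'e set \<Rightarrow> 'e \<Rightarrow> 'e"
    and lam :: "'e \<Rightarrow> 'w \<Rightarrow> real"
    and Delta :: "'e \<Rightarrow> 'e \<Rightarrow> 'w \<Rightarrow> real"
    and X :: "'e \<Rightarrow> 'w \<Rightarrow> cpt"
  defines "Lam \<equiv> (\<lambda>\<omega>. lamseq E (\<sigma> \<omega>) (\<lambda>x. lam x \<omega>))"
  assumes P: "prob_space M"
    and cE: "countable E" and iE: "infinite E"
    \<comment> \<open>sigma is a random virtual permutation\<close>
    and vp: "\<forall>\<omega>\<in>space M. virtual_perm E (\<sigma> \<omega>)"
    and meas_sigma: "\<forall>J p. finite J \<and> J \<subseteq> E \<longrightarrow> {\<omega>\<in>space M. \<sigma> \<omega> J = p} \<in> sets M"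
    \<comment> \<open>central law\<close>
    and central: "\<forall>J p \<tau>. finite J \<and> J \<subseteq> E \<and> \<tau> permutes J \<longrightarrow>
        measure M {\<omega>\<in>space M. \<sigma> \<omega> J = \<tau> \<circ> p \<circ> inv \<tau>} = measure M {\<omega>\<in>space M. \<sigma> \<omega> J = p}"
    \<comment> \<open>lambda(x) is the L1 limit of |I \<inter> C(x)|/|I|\<close>
    and lam_meas: "\<forall>x\<in>E. lam x \<in> borel_measurable M"
    and lam_lim: "\<forall>x\<in>E. ((\<lambda>I. \<integral>\<^sup>+\<omega>. ennreal \<bar>real (card (I \<inter> vclass E (\<sigma> \<omega>) x)) / real (card I)
                                      - lam x \<omega>\<bar> \<partial>M) \<longlongrightarrow> 0) (finsets_top E {})"
    \<comment> \<open>Delta(x,y) is the L1 limit of k_I(x,y)/|I| on the event x ~ y\<close>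
    and Delta_meas: "\<forall>x\<in>E. \<forall>y\<in>E. Delta x y \<in> borel_measurable M"
    and Delta_lim: "\<forall>x\<in>E. \<forall>y\<in>E. ((\<lambda>I. \<integral>\<^sup>+\<omega>. ennreal (indicator {\<omega>. vequiv E (\<sigma> \<omega>) x y} \<omega> *
              \<bar>real (kI E (\<sigma> \<omega>) I x y) / real (card I) - Delta x y \<omega>\<bar>) \<partial>M) \<longlongrightarrow> 0)
            (finsets_top E {x, y})"
    \<comment> \<open>the X_x are random variables in C, conditionally on (lambda_k) i.i.d. uniform on C\<close>
    and X_meas: "\<forall>x\<in>E. \<forall>A. admissible A \<longrightarrow> {\<omega>\<in>space M. X x \<omega> \<in> A} \<in> sets M"
    and X_in_C: "AE \<omega> in M. \<forall>x\<in>E. X x \<omega> \<in> Cspace (Lam \<omega>)"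
    and X_cond_iid: "\<forall>F A B. finite F \<and> F \<subseteq> E \<and> (\<forall>x\<in>F. admissible (A x))
          \<and> B \<in> sets (\<Pi>\<^sub>M k\<in>(UNIV::nat set). (borel :: real measure)) \<longrightarrow>
        emeasure M {\<omega>\<in>space M. Lam \<omega> \<in> B \<and> (\<forall>x\<in>F. X x \<omega> \<in> A x)}
          = (\<integral>\<^sup>+\<omega>. indicator {\<omega>. Lam \<omega> \<in> B} \<omega> * (\<Prod>x\<in>F. unifC (Lam \<omega>) (A x)) \<partial>M)"
    \<comment> \<open>coupling with sigma\<close>
    and X_fixed: "AE \<omega> in M. \<forall>x\<in>E. (X x \<omega> \<in> Lseg (Lam \<omega>) \<longleftrightarrow> vfixed E (\<sigma> \<omega>) x)"
    and X_equiv: "AE \<omega> in M. \<forall>x\<in>E. \<forall>y\<in>E. x \<noteq> y \<longrightarrow>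
        (vequiv E (\<sigma> \<omega>) x y \<longleftrightarrow> (\<exists>k. X x \<omega> \<in> circle (Lam \<omega>) k \<and> X y \<omega> \<in> circle (Lam \<omega>) k))
        \<and> (\<forall>k. X x \<omega> \<in> circle (Lam \<omega>) k \<and> X y \<omega> \<in> circle (Lam \<omega>) k \<longrightarrow>
               lam x \<omega> = Lam \<omega> k \<and> lam y \<omega> = Lam \<omega> k)"
    and X_delta: "AE \<omega> in M. \<forall>x\<in>E. \<forall>y\<in>E. x \<noteq> y \<and> vequiv E (\<sigma> \<omega>) x y \<longrightarrow>
        (\<exists>k s t. X x \<omega> = Circ k s \<and> X y \<omega> = Circ k t \<and>
           (\<exists>m::int. Delta x y \<omega> = (t - s) + of_int m * lam x \<omega>))"
  shows "AE \<omega> in M. bij_betw (\<lambda>x. X x \<omega>) E ((\<lambda>x. X x \<omega>) ` E) \<and>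
           (\<forall>x\<in>E. \<forall>y\<in>E. Dmet (Lam \<omega>) (X x \<omega>) (X y \<omega>)
                         = dmet E (\<sigma> \<omega>) (\<lambda>z. lam z \<omega>) (\<lambda>z w. Delta z w \<omega>) x y)"
proof -
  interpret prob_space M by (rule P)
  have UNIVs: "UNIV \<in> sets (\<Pi>\<^sub>M k\<in>(UNIV::nat set). (borel :: real measure))"
    using sets.top[of "\<Pi>\<^sub>M k\<in>(UNIV::nat set). (borel :: real measure)"] by (simp add: space_PiM)
  have noat: "AE \<omega> in M. x \<noteq> y \<longrightarrow> X x \<omega> \<noteq> X y \<omega>" if x: "x \<in> E" and y: "y \<in> E" for x y
  proof (cases "x = y")
    case True then show ?thesis by simp
  next
    case xy: False
    have "AE \<omega> in M. X x \<omega> \<noteq> X y \<omega>"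
    proof (rule noatom[where U="\<lambda>\<omega> A. unifC (Lam \<omega>) A"])
      show "prob_space M" by (rule P)
      show "{\<omega> \<in> space M. X x \<omega> \<in> A} \<in> sets M" if "admissible A" for A using X_meas x that by blast
      show "{\<omega> \<in> space M. X y \<omega> \<in> A} \<in> sets M" if "admissible A" for A using X_meas y that by blast
      show "emeasure M {\<omega> \<in> space M. X x \<omega> \<in> A} = (\<integral>\<^sup>+\<omega>. unifC (Lam \<omega>) A \<partial>M)" if A: "admissible A" for A
      proof -
        have "emeasure M {\<omega>\<in>space M. Lam \<omega> \<in> UNIV \<and> (\<forall>z\<in>{x}. X z \<omega> \<in> (\<lambda>_. A) z)}
          = (\<integral>\<^sup>+\<omega>. indicator {\<omega>. Lam \<omega> \<in> UNIV} \<omega> * (\<Prod>z\<in>{x}. unifC (Lam \<omega>) ((\<lambda>_. A) z)) \<partial>M)"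
          using X_cond_iid[rule_format, of "{x}" "\<lambda>_. A" UNIV] x A UNIVs by simp
        then show ?thesis by simp
      qed
      show "emeasure M {\<omega> \<in> space M. X x \<omega> \<in> A \<and> X y \<omega> \<in> A} = (\<integral>\<^sup>+\<omega>. unifC (Lam \<omega>) A * unifC (Lam \<omega>) A \<partial>M)"
        if A: "admissible A" for A
      proof -
        have "emeasure M {\<omega>\<in>space M. Lam \<omega> \<in> UNIV \<and> (\<forall>z\<in>{x,y}. X z \<omega> \<in> (\<lambda>_. A) z)}
          = (\<integral>\<^sup>+\<omega>. indicator {\<omega>. Lam \<omega> \<in> UNIV} \<omega> * (\<Prod>z\<in>{x,y}. unifC (Lam \<omega>) ((\<lambda>_. A) z)) \<partial>M)"
          using X_cond_iid[rule_format, of "{x,y}" "\<lambda>_. A" UNIV] x y A UNIVs by simp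
        then show ?thesis using xy by simp
      qed
      show "unifC (Lam \<omega>) (pc n i) \<le> ennreal (1 / real n)" if "n > 0" for n i \<omega> using pc_unif that by blast
    qed
    then show ?thesis by eventually_elim simp
  qed
  have noatAE: "AE \<omega> in M. \<forall>x\<in>E. \<forall>y\<in>E. x \<noteq> y \<longrightarrow> X x \<omega> \<noteq> X y \<omega>"
    using noat by (simp add: AE_ball_countable[OF cE])
  have D0: "AE \<omega> in M. \<forall>x\<in>E. Delta x x \<omega> = 0"
  proof (subst AE_ball_countable[OF cE], intro ballI)
    fix x assume x: "x \<in> E"
    show "AE \<omega> in M. Delta x x \<omega> = 0"
      by (rule Delta_self[OF vp iE x]) (use Delta_meas Delta_lim x in blast)+
  qed
  show ?thesis using noatAE D0 X_in_C X_equiv X_delta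
  proof eventually_elim
    case (elim \<omega>)
    show ?case
      by (rule pointwise[where Y="\<lambda>x. X x \<omega>" and D="\<lambda>z w. Delta z w \<omega>" and L="Lam \<omega>"
            and s="\<sigma> \<omega>" and l="\<lambda>z. lam z \<omega>"]) (use elim in simp_all)
  qed
qed

end
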